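(* Let $T=(V,E)$ be a finite undirected tree, let $\mathcal{O}$ be a nonempty proper subset of $V$, and consider the infection model described in the context. Let $R\subset[\mathcal{O}]$ be a star arrangement of classes and $\partial R:=\bigcup_{r\in R}\partial r$. If $s\in\bigcup_{r\in R}r$, then the statistic $(\tau_o)_{o\in\partial R}$ is sufficient for $s$; that is, as the source $s$ ranges over $\bigcup_{r\in R}r$, the conditional distribution of the full observer vector $(\tau_o)_{o\in\mathcal{O}}$ given $(\tau_o)_{o\in\partial R}$ does not depend on $s$.
   Context: Infection model: an infection starts at time $0$ at a single unknown node $s\in V$ (the source). For each edge $e\in E$ there is a nonnegative random delay $\tau_e$ with a continuous distribution of known law, and the $\tau_e$, $e\in E$, are independent. For $u,v\in V$, $[u,v]$ denotes the set of edges (or vertices) of the unique path in $T$ between $u$ and $v$. The infection time of $v$ is $\tau_v:=\sum_{e\in[s,v]}\tau_e$. The observers are the nodes of $\mathcal{O}$. Equivalence classes: for $u,v\in V\setminus\mathcal{O}$, $u\equiv v$ iff $[u,v]\cap\mathcal{O}=\emptyset$ (vertex sets); $[\mathcal{O}]$ is the set of classes. For $r\in[\mathcal{O}]$, $\partial r$ is the set of observers adjacent to some node of $r$. A set $R\subset[\mathcal{O}]$ is a star arrangement if $\bigcap_{r\in R}\partial r\neq\emptyset$. *)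

theory Defs
  imports "HOL-Probability.Probability"
begin

definition is_path :: "'a set set \<Rightarrow> 'a list \<Rightarrow> bool" where
  "is_path E p \<longleftrightarrow> p \<noteq> [] \<and> distinct p \<and> (\<forall>i. Suc i < length p \<longrightarrow> {p ! i, p ! Suc i} \<in> E)"

definition is_tree :: "'a set \<Rightarrow> 'a set set \<Rightarrow> bool" where
  "is_tree V E \<longleftrightarrow> finite V \<and> V \<noteq> {} \<and> (\<forall>e\<in>E. e \<subseteq> V \<and> card e = 2) \<and>
     (\<forall>u\<in>V. \<forall>v\<in>V. \<exists>!p. is_path E p \<and> hd p = u \<and> last p = v)"

definition tree_path :: "'a set set \<Rightarrow> 'a \<Rightarrow> 'a \<Rightarrow> 'a list" where
  "tree_path E u v = (THE p. is_path E p \<and> hd p = u \<and> last p = v)"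

definition path_vertices :: "'a set set \<Rightarrow> 'a \<Rightarrow> 'a \<Rightarrow> 'a set" where
  "path_vertices E u v = set (tree_path E u v)"

definition path_edges :: "'a set set \<Rightarrow> 'a \<Rightarrow> 'a \<Rightarrow> 'a set set" where
  "path_edges E u v = (let p = tree_path E u v in {{p ! i, p ! Suc i} | i. Suc i < length p})"

definition obs_equiv :: "'a set \<Rightarrow> 'a set set \<Rightarrow> 'a set \<Rightarrow> ('a \<times> 'a) set" where
  "obs_equiv V E Obs = {(u, v). u \<in> V - Obs \<and> v \<in> V - Obs \<and> path_vertices E u v \<inter> Obs = {}}"

definition obs_classes :: "'a set \<Rightarrow> 'a set set \<Rightarrow> 'a set \<Rightarrow> 'a set set" where
  "obs_classes V E Obs = (V - Obs) // obs_equiv V E Obs"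

definition obs_boundary :: "'a set set \<Rightarrow> 'a set \<Rightarrow> 'a set \<Rightarrow> 'a set" where
  "obs_boundary E Obs r = {w \<in> Obs. \<exists>v\<in>r. {w, v} \<in> E}"

definition star_arrangement :: "'a set \<Rightarrow> 'a set set \<Rightarrow> 'a set \<Rightarrow> 'a set set \<Rightarrow> bool" where
  "star_arrangement V E Obs R \<longleftrightarrow> R \<subseteq> obs_classes V E Obs \<and> (\<Inter>r\<in>R. obs_boundary E Obs r) \<noteq> {}"

definition boundary_set :: "'a set set \<Rightarrow> 'a set \<Rightarrow> 'a set set \<Rightarrow> 'a set" where
  "boundary_set E Obs R = (\<Union>r\<in>R. obs_boundary E Obs r)"

text \<open>Canonical realisation: a sample point assigns to each edge its delay; the delays are
  independent with laws mu e, i.e. the sample space is the product measure PiM E mu.\<close>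

definition infection_time :: "'a set set \<Rightarrow> 'a \<Rightarrow> 'a \<Rightarrow> ('a set \<Rightarrow> real) \<Rightarrow> real" where
  "infection_time E s v \<omega> = (\<Sum>e\<in>path_edges E s v. \<omega> e)"

definition obs_vector :: "'a set set \<Rightarrow> 'a set \<Rightarrow> 'a \<Rightarrow> ('a set \<Rightarrow> real) \<Rightarrow> ('a \<Rightarrow> real)" where
  "obs_vector E Obs s \<omega> = (\<lambda>w\<in>Obs. infection_time E s w \<omega>)"

end

theory Submission
  imports Defs
begin


fun walk :: "'a set set \<Rightarrow> 'a list \<Rightarrow> bool" where
  "walk E [] = False"
| "walk E [x] = True"
| "walk E (x # y # xs) = ({x, y} \<in> E \<and> walk E (y # xs))"

fun edges_l :: "'a list \<Rightarrow> 'a set set" where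
  "edges_l [] = {}"
| "edges_l [x] = {}"
| "edges_l (x # y # xs) = insert {x, y} (edges_l (y # xs))"

lemma edges_of_eq: "{{p ! i, p ! Suc i} | i. Suc i < length p} = edges_l p"
proof (induction p rule: edges_l.induct)
  case (3 x y xs)
  have "{{(x#y#xs) ! i, (x#y#xs) ! Suc i} | i. Suc i < length (x#y#xs)}
      = insert {x,y} {{(y#xs) ! i, (y#xs) ! Suc i} | i. Suc i < length (y#xs)}"
  proof (intro equalityI subsetI)
    fix e assume "e \<in> {{(x#y#xs) ! i, (x#y#xs) ! Suc i} | i. Suc i < length (x#y#xs)}"
    then obtain i where "e = {(x#y#xs) ! i, (x#y#xs) ! Suc i}" "Suc i < length (x#y#xs)" by blast
    then show "e \<in> insert {x,y} {{(y#xs) ! i, (y#xs) ! Suc i} | i. Suc i < length (y#xs)}"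
      by (cases i) auto
  next
    fix e assume "e \<in> insert {x,y} {{(y#xs) ! i, (y#xs) ! Suc i} | i. Suc i < length (y#xs)}"
    then show "e \<in> {{(x#y#xs) ! i, (x#y#xs) ! Suc i} | i. Suc i < length (x#y#xs)}"
    proof
      assume "e = {x,y}" then show ?thesis by (auto intro!: exI[of _ 0])
    next
      assume "e \<in> {{(y#xs) ! i, (y#xs) ! Suc i} | i. Suc i < length (y#xs)}"
      then obtain i where "e = {(y#xs) ! i, (y#xs) ! Suc i}" "Suc i < length (y#xs)" by blast
      then show ?thesis by (auto intro!: exI[of _ "Suc i"])
    qed
  qed
  then show ?case using 3 by simp
qed auto

lemma path_edges_l: "path_edges E u v = edges_l (tree_path E u v)"
  unfolding path_edges_def Let_def edges_of_eq ..

lemma walk_iff: "walk E p \<longleftrightarrow> p \<noteq> [] \<and> (\<forall>i. Suc i < length p \<longrightarrow> {p ! i, p ! Suc i} \<in> E)"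
proof (induction p rule: edges_l.induct)
  case (3 x y xs)
  show ?case
  proof
    assume "walk E (x # y # xs)"
    then show "x # y # xs \<noteq> [] \<and> (\<forall>i. Suc i < length (x # y # xs) \<longrightarrow> {(x # y # xs) ! i, (x # y # xs) ! Suc i} \<in> E)"
      using 3 by (auto simp: less_Suc_eq_0_disj)
  next
    assume H: "x # y # xs \<noteq> [] \<and> (\<forall>i. Suc i < length (x # y # xs) \<longrightarrow> {(x # y # xs) ! i, (x # y # xs) ! Suc i} \<in> E)"
    then have "{x,y} \<in> E" by (metis length_Cons nth_Cons_0 nth_Cons_Suc zero_less_Suc Suc_less_eq)
    moreover have "\<forall>i. Suc i < length (y # xs) \<longrightarrow> {(y # xs) ! i, (y # xs) ! Suc i} \<in> E"
    proof (intro allI impI)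
      fix i assume "Suc i < length (y # xs)"
      then have "Suc (Suc i) < length (x # y # xs)" by simp
      then show "{(y # xs) ! i, (y # xs) ! Suc i} \<in> E" using H by fastforce
    qed
    ultimately show "walk E (x # y # xs)" using 3 by simp
  qed
qed auto

lemma is_path_iff: "is_path E p \<longleftrightarrow> walk E p \<and> distinct p"
  unfolding is_path_def walk_iff by auto

lemma walk_append: "walk E (xs @ y # ys) \<longleftrightarrow> walk E (xs @ [y]) \<and> walk E (y # ys)"
  by (induction xs rule: edges_l.induct) auto

lemma edges_append: "edges_l (xs @ y # ys) = edges_l (xs @ [y]) \<union> edges_l (y # ys)"
  by (induction xs rule: edges_l.induct) auto

lemma walk_app_edge: "walk E xs \<Longrightarrow> walk E ys \<Longrightarrow> {last xs, hd ys} \<in> E \<Longrightarrow> walk E (xs @ ys)"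
proof (induction xs rule: edges_l.induct)
  case (2 x)
  then show ?case by (cases ys) auto
qed auto

lemma walk_rev: "walk E xs \<Longrightarrow> walk E (rev xs)"
proof (induction xs rule: edges_l.induct)
  case (3 x y xs)
  then have "walk E (rev xs @ [y])" by simp
  moreover have "walk E [y, x]" using 3 by (simp add: insert_commute)
  ultimately have "walk E ((rev xs @ [y]) @ [x])"
    by (metis append.assoc append_Cons append_Nil walk_append)
  then show ?case by simp
qed auto

lemma edges_l_sub: "e \<in> edges_l p \<Longrightarrow> e \<subseteq> set p"
  by (induction p rule: edges_l.induct) auto

lemma edges_l_walk: "walk E p \<Longrightarrow> edges_l p \<subseteq> E"
  by (induction p rule: edges_l.induct) auto

lemma edges_l_finite: "finite (edges_l p)"
  by (induction p rule: edges_l.induct) auto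

lemma edges_l_tl: "e \<in> edges_l (h # t) \<Longrightarrow> \<exists>z\<in>set t. z \<in> e"
  by (induction t arbitrary: h) (auto simp: neq_Nil_conv)

lemma walk_to_path:
  "walk E xs \<Longrightarrow> \<exists>p. is_path E p \<and> hd p = hd xs \<and> last p = last xs \<and> set p \<subseteq> set xs"
proof (induction "length xs" arbitrary: xs rule: less_induct)
  case less
  show ?case
  proof (cases "distinct xs")
    case True then show ?thesis using less.prems by (auto simp: is_path_iff)
  next
    case False
    then obtain a y b c where xs: "xs = a @ [y] @ b @ [y] @ c" using not_distinct_decomp by blast
    have w1: "walk E (a @ [y])" using less.prems unfolding xs
      using walk_append[of E a y "b @ [y] @ c"] by simp
    have w2: "walk E (y # c)" using less.prems unfolding xs
      using walk_append[of E "a @ [y] @ b" y c] by simp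
    have w: "walk E (a @ y # c)"
    proof (cases c)
      case Nil then show ?thesis using w1 by simp
    next
      case (Cons z zs)
      then show ?thesis using w1 w2 walk_append[of E a y c] by simp
    qed
    have "length (a @ y # c) < length xs" using xs by simp
    from less.hyps[OF this w] obtain p where p: "is_path E p" "hd p = hd (a @ y # c)"
      "last p = last (a @ y # c)" "set p \<subseteq> set (a @ y # c)" by blast
    have "hd (a @ y # c) = hd xs" using xs by (cases a) auto
    moreover have "last (a @ y # c) = last xs" using xs by (cases c rule: rev_cases) auto
    moreover have "set (a @ y # c) \<subseteq> set xs" using xs by auto
    ultimately have "is_path E p \<and> hd p = hd xs \<and> last p = last xs \<and> set p \<subseteq> set xs"
      using p by auto
    then show ?thesis by blast
  qed
qed

context
  fixes V :: "'a set" and E :: "'a set set"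
  assumes tree: "is_tree V E"
begin

lemma tp_uniq: "u \<in> V \<Longrightarrow> v \<in> V \<Longrightarrow> \<exists>!p. is_path E p \<and> hd p = u \<and> last p = v"
  using tree unfolding is_tree_def by blast

lemma tp: "u \<in> V \<Longrightarrow> v \<in> V \<Longrightarrow> is_path E (tree_path E u v) \<and> hd (tree_path E u v) = u \<and> last (tree_path E u v) = v"
  unfolding tree_path_def by (rule theI'[OF tp_uniq])

lemma tp_unique: "u \<in> V \<Longrightarrow> v \<in> V \<Longrightarrow> is_path E p \<Longrightarrow> hd p = u \<Longrightarrow> last p = v \<Longrightarrow> tree_path E u v = p"
  unfolding tree_path_def by (rule the1_equality[OF tp_uniq]) auto

lemma edge_V: "e \<in> E \<Longrightarrow> e \<subseteq> V"
  using tree unfolding is_tree_def by blast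

lemma walk_V: "walk E p \<Longrightarrow> hd p \<in> V \<Longrightarrow> set p \<subseteq> V"
proof (induction p rule: edges_l.induct)
  case (3 x y xs)
  have "{x,y} \<in> E" using 3(2) by simp
  then have "{x,y} \<subseteq> V" by (rule edge_V)
  then have "y \<in> V" by simp
  moreover have "walk E (y # xs)" using 3(2) by simp
  ultimately have "set (y # xs) \<subseteq> V" using 3(1) by simp
  then show ?case using 3(3) by simp
qed auto

lemma tp_walk: "walk E xs \<Longrightarrow> hd xs \<in> V \<Longrightarrow> set (tree_path E (hd xs) (last xs)) \<subseteq> set xs"
proof -
  assume w: "walk E xs" and h: "hd xs \<in> V"
  have "xs \<noteq> []" using w by (cases xs) auto
  then have "last xs \<in> V" using walk_V[OF w h] by auto
  obtain p where p: "is_path E p" "hd p = hd xs" "last p = last xs" "set p \<subseteq> set xs"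
    using walk_to_path[OF w] by blast
  have "tree_path E (hd xs) (last xs) = p" using tp_unique[OF h \<open>last xs \<in> V\<close> p(1-3)] .
  then show ?thesis using p(4) by simp
qed

lemma tp_refl: "u \<in> V \<Longrightarrow> tree_path E u u = [u]"
  by (rule tp_unique) (auto simp: is_path_iff)

lemma tp_V: "u \<in> V \<Longrightarrow> v \<in> V \<Longrightarrow> set (tree_path E u v) \<subseteq> V"
  using tp walk_V is_path_iff by metis

end



lemma walk_join: "xs \<noteq> [] \<Longrightarrow> ys \<noteq> [] \<Longrightarrow> last xs = hd ys \<Longrightarrow> walk E xs \<Longrightarrow> walk E ys \<Longrightarrow> walk E (xs @ tl ys)"
proof -
  assume a: "xs \<noteq> []" "ys \<noteq> []" "last xs = hd ys" "walk E xs" "walk E ys"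
  obtain xs' y where xs: "xs = xs' @ [y]" using a(1) by (cases xs rule: rev_cases) auto
  obtain ys' where ys: "ys = y # ys'" using a(2,3) xs by (cases ys) auto
  show ?thesis using a(4,5) walk_append[of E xs' y ys'] unfolding xs ys by simp
qed

lemma join_props: "xs \<noteq> [] \<Longrightarrow> ys \<noteq> [] \<Longrightarrow> last xs = hd ys \<Longrightarrow>
   hd (xs @ tl ys) = hd xs \<and> last (xs @ tl ys) = last ys \<and> set (xs @ tl ys) \<subseteq> set xs \<union> set ys
   \<and> edges_l (xs @ tl ys) = edges_l xs \<union> edges_l ys"
proof -
  assume a: "xs \<noteq> []" "ys \<noteq> []" "last xs = hd ys"
  obtain xs' y where xs: "xs = xs' @ [y]" using a(1) by (cases xs rule: rev_cases) auto
  obtain ys' where ys: "ys = y # ys'" using a(2,3) xs by (cases ys) auto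
  have "last (xs' @ [y] @ ys') = last (y # ys')" by (cases ys') auto
  then show ?thesis using edges_append[of xs' y ys'] unfolding xs ys by (cases xs') auto
qed

lemma walk_suffix: "walk E (a @ b) \<Longrightarrow> b \<noteq> [] \<Longrightarrow> walk E b"
proof (induction a)
  case (Cons x a)
  then show ?case by (cases "a @ b") auto
qed simp

lemma split_last_in: "q \<noteq> [] \<Longrightarrow> (\<exists>x\<in>set q. x \<in> S) \<Longrightarrow>
  \<exists>a b. q = a @ b \<and> b \<noteq> [] \<and> hd b \<in> S \<and> (\<forall>x\<in>set (tl b). x \<notin> S)"
proof (induction q)
  case (Cons x q)
  show ?case
  proof (cases "\<exists>y\<in>set q. y \<in> S")
    case True
    then have "q \<noteq> []" by auto
    then obtain a b where "q = a @ b \<and> b \<noteq> [] \<and> hd b \<in> S \<and> (\<forall>x\<in>set (tl b). x \<notin> S)"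
      using Cons.IH True by blast
    then show ?thesis by (intro exI[of _ "x # a"] exI[of _ b]) auto
  next
    case False
    then have "x \<in> S" using Cons.prems by auto
    then show ?thesis using False by (intro exI[of _ "[]"] exI[of _ "x # q"]) auto
  qed
qed simp

context
  fixes V :: "'a set" and E :: "'a set set" and Obs :: "'a set"
  assumes tree: "is_tree V E"
begin

lemma class_sub: "r \<in> obs_classes V E Obs \<Longrightarrow> r \<subseteq> V - Obs"
  unfolding obs_classes_def obs_equiv_def by (auto elim!: quotientE)

lemma class_eq: "r \<in> obs_classes V E Obs \<Longrightarrow> \<exists>x\<in>V - Obs. r = obs_equiv V E Obs `` {x}"
  unfolding obs_classes_def by (auto elim!: quotientE)

lemma class_path: assumes r: "r \<in> obs_classes V E Obs" and u: "u \<in> r" and v: "v \<in> r"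
  shows "set (tree_path E u v) \<subseteq> r"
proof -
  obtain x where x: "x \<in> V - Obs" "r = obs_equiv V E Obs `` {x}" using class_eq[OF r] by blast
  have xu: "u \<in> V - Obs" "set (tree_path E x u) \<inter> Obs = {}"
    using u x unfolding obs_equiv_def path_vertices_def by auto
  have xv: "v \<in> V - Obs" "set (tree_path E x v) \<inter> Obs = {}"
    using v x unfolding obs_equiv_def path_vertices_def by auto
  let ?p = "tree_path E x u" and ?q = "tree_path E x v"
  have pp: "is_path E ?p" "hd ?p = x" "last ?p = u" using tp[OF tree, of x u] x xu by auto
  have qq: "is_path E ?q" "hd ?q = x" "last ?q = v" using tp[OF tree, of x v] x xv by auto
  have ne: "rev ?p \<noteq> []" "?q \<noteq> []" using pp qq by (auto simp: is_path_def)
  have jp: "hd (rev ?p @ tl ?q) = u \<and> last (rev ?p @ tl ?q) = v \<and> set (rev ?p @ tl ?q) \<subseteq> set ?p \<union> set ?q"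
    using join_props[OF ne] pp qq ne by (simp add: hd_rev last_rev)
  have w: "walk E (rev ?p @ tl ?q)"
  proof (rule walk_join[OF ne])
    show "last (rev ?p) = hd ?q" using pp qq ne by (simp add: last_rev)
    show "walk E (rev ?p)" using pp by (simp add: is_path_iff walk_rev)
    show "walk E ?q" using qq by (simp add: is_path_iff)
  qed
  have uv: "set (tree_path E u v) \<subseteq> set ?p \<union> set ?q"
    using tp_walk[OF tree w] jp xu by auto
  show ?thesis
  proof
    fix z assume z: "z \<in> set (tree_path E u v)"
    have zO: "z \<notin> Obs" using uv z xu xv by auto
    have zV: "z \<in> V" using tp_V[OF tree, of u v] xu xv z by auto
    obtain a c where ac: "tree_path E u v = a @ z # c" using z split_list by metis
    have tuv: "is_path E (tree_path E u v)" "hd (tree_path E u v) = u" using tp[OF tree, of u v] xu xv by auto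
    have wa: "walk E (a @ [z])" using tuv ac walk_append[of E a z c] by (simp add: is_path_iff)
    have ha: "hd (a @ [z]) = u" using tuv ac by (cases a) auto
    have ne2: "?p \<noteq> []" "a @ [z] \<noteq> []" using ne by auto
    have w2: "walk E (?p @ tl (a @ [z]))" using walk_join[OF ne2] pp wa ha by (simp add: is_path_iff)
    have jp2: "hd (?p @ tl (a @ [z])) = x \<and> last (?p @ tl (a @ [z])) = z \<and> set (?p @ tl (a @ [z])) \<subseteq> set ?p \<union> set (a @ [z])"
      using join_props[OF ne2] pp ha by simp
    have "set (tree_path E x z) \<subseteq> set ?p \<union> set (a @ [z])"
      using tp_walk[OF tree w2] jp2 x by auto
    moreover have "set (a @ [z]) \<subseteq> set (tree_path E u v)" using ac by auto
    ultimately have "set (tree_path E x z) \<inter> Obs = {}" using uv xu xv zO by blast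
    then have "(x, z) \<in> obs_equiv V E Obs" using x zO zV unfolding obs_equiv_def path_vertices_def by auto
    then show "z \<in> r" using x by auto
  qed
qed

lemma class_adj: assumes r: "r \<in> obs_classes V E Obs" and h: "h \<in> r" and e: "{h, w} \<in> E" and w: "w \<notin> Obs"
  shows "w \<in> r"
proof -
  obtain x where x: "x \<in> V - Obs" "r = obs_equiv V E Obs `` {x}" using class_eq[OF r] by blast
  have xh: "h \<in> V - Obs" "set (tree_path E x h) \<inter> Obs = {}"
    using h x unfolding obs_equiv_def path_vertices_def by auto
  have wV: "w \<in> V" using edge_V[OF tree e] by simp
  let ?p = "tree_path E x h"
  have pp: "is_path E ?p" "hd ?p = x" "last ?p = h" using tp[OF tree, of x h] x xh by auto
  have ne: "?p \<noteq> []" using pp by (auto simp: is_path_def)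
  have wk: "walk E (?p @ [w])" using walk_app_edge[of E ?p "[w]"] pp e by (simp add: is_path_iff)
  have hl: "hd (?p @ [w]) = x" "last (?p @ [w]) = w" using pp ne by auto
  have "set (tree_path E (hd (?p @ [w])) (last (?p @ [w]))) \<subseteq> set (?p @ [w])"
    by (rule tp_walk[OF tree wk]) (use x hl in simp)
  then have "set (tree_path E x w) \<subseteq> set (?p @ [w])" unfolding hl .
  then have "set (tree_path E x w) \<inter> Obs = {}" using xh w by auto
  then have "(x, w) \<in> obs_equiv V E Obs" using x w wV unfolding obs_equiv_def path_vertices_def by auto
  then show "w \<in> r" using x by auto
qed

end



context
  fixes V :: "'a set" and E :: "'a set set" and Obs :: "'a set"
  assumes tree: "is_tree V E"
begin

lemma tree_structure:
  assumes obsV: "Obs \<subseteq> V" and star: "star_arrangement V E Obs R" and Rne: "R \<noteq> {}"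
  shows "\<exists>pf. (\<forall>ob\<in>Obs. pf ob \<in> boundary_set E Obs R \<and>
              path_edges E (pf ob) ob \<subseteq> E - {e\<in>E. e \<subseteq> \<Union>R \<union> boundary_set E Obs R})
      \<and> (\<forall>s\<in>\<Union>R. \<forall>b\<in>boundary_set E Obs R. path_edges E s b \<subseteq> {e\<in>E. e \<subseteq> \<Union>R \<union> boundary_set E Obs R})
      \<and> (\<forall>s\<in>\<Union>R. \<forall>ob\<in>Obs. path_edges E s ob = path_edges E s (pf ob) \<union> path_edges E (pf ob) ob)"
proof -
  define BR where "BR = boundary_set E Obs R"
  define S where "S = \<Union>R \<union> BR"
  define Ein where "Ein = {e\<in>E. e \<subseteq> S}"
  have Rcl: "R \<subseteq> obs_classes V E Obs" using star unfolding star_arrangement_def by blast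
  obtain os where os: "\<forall>r\<in>R. os \<in> obs_boundary E Obs r"
    using star unfolding star_arrangement_def by blast
  obtain r0 where r0: "r0 \<in> R" using Rne by blast
  have osO: "os \<in> Obs" using os r0 unfolding obs_boundary_def by blast
  have osBR: "os \<in> BR" using os r0 unfolding BR_def boundary_set_def by blast
  have adj: "\<forall>r\<in>R. \<exists>c\<in>r. {os, c} \<in> E" using os unfolding obs_boundary_def by blast
  have UR: "\<Union>R \<subseteq> V - Obs" using Rcl class_sub[OF tree] by blast
  have BRO: "BR \<subseteq> Obs" unfolding BR_def boundary_set_def obs_boundary_def by blast
  have tpp: "is_path E (tree_path E u v) \<and> hd (tree_path E u v) = u \<and> last (tree_path E u v) = v \<and> tree_path E u v \<noteq> []"
    if "u \<in> V" "v \<in> V" for u v using tp[OF tree that] by (auto simp: is_path_def)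
  have conn: "set (tree_path E s b) \<subseteq> S" if s: "s \<in> \<Union>R" and b: "b \<in> BR" for s b
  proof -
    obtain r1 where r1: "r1 \<in> R" "s \<in> r1" using s by blast
    obtain r2 where r2: "r2 \<in> R" "b \<in> obs_boundary E Obs r2" using b unfolding BR_def boundary_set_def by blast
    obtain v' where v': "v' \<in> r2" "{b, v'} \<in> E" "b \<in> Obs" using r2(2) unfolding obs_boundary_def by blast
    obtain c1 where c1: "c1 \<in> r1" "{os, c1} \<in> E" using adj r1 by blast
    obtain c2 where c2: "c2 \<in> r2" "{os, c2} \<in> E" using adj r2 by blast
    have V: "s \<in> V" "c1 \<in> V" "c2 \<in> V" "v' \<in> V" "b \<in> V"
      using r1 r2 c1 c2 v' UR obsV by auto
    define p1 where "p1 = tree_path E s c1"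
    define p2 where "p2 = tree_path E c2 v'"
    have P1: "is_path E p1" "hd p1 = s" "last p1 = c1" "p1 \<noteq> []" using tpp[of s c1] V unfolding p1_def by auto
    have P2: "is_path E p2" "hd p2 = c2" "last p2 = v'" "p2 \<noteq> []" using tpp[of c2 v'] V unfolding p2_def by auto
    have s1: "set p1 \<subseteq> r1" unfolding p1_def using class_path[OF tree] Rcl r1 c1 by blast
    have s2: "set p2 \<subseteq> r2" unfolding p2_def using class_path[OF tree] Rcl r2 c2 v' by blast
    have w3: "walk E (p2 @ [b])"
      using walk_app_edge[of E p2 "[b]"] P2 v'(2) by (simp add: is_path_iff insert_commute)
    have w2: "walk E ([os] @ (p2 @ [b]))"
      using walk_app_edge[of E "[os]" "p2 @ [b]"] P2 w3 c2(2) by simp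
    have w1: "walk E (p1 @ ([os] @ (p2 @ [b])))"
      using walk_app_edge[of E p1 "[os] @ (p2 @ [b])"] P1 w2 c1(2) by (simp add: is_path_iff insert_commute)
    let ?W = "p1 @ ([os] @ (p2 @ [b]))"
    have hl: "hd ?W = s" "last ?W = b" using P1 by auto
    have "set (tree_path E (hd ?W) (last ?W)) \<subseteq> set ?W"
      by (rule tp_walk[OF tree w1]) (use hl V in simp)
    then have "set (tree_path E s b) \<subseteq> set ?W" unfolding hl .
    moreover have "set ?W \<subseteq> S" using s1 s2 r1 r2 osBR b unfolding S_def by auto
    ultimately show ?thesis by blast
  qed
  have edges_in: "path_edges E s b \<subseteq> Ein" if s: "s \<in> \<Union>R" and b: "b \<in> BR" for s b
  proof
    fix e assume e: "e \<in> path_edges E s b"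
    have V: "s \<in> V" "b \<in> V" using s b UR BRO obsV by auto
    have "walk E (tree_path E s b)" using tpp[OF V] by (simp add: is_path_iff)
    then have "e \<in> E" using e edges_l_walk unfolding path_edges_l by blast
    moreover have "e \<subseteq> S" using e edges_l_sub conn[OF s b] unfolding path_edges_l by blast
    ultimately show "e \<in> Ein" unfolding Ein_def by blast
  qed
  have ex: "\<exists>p. p \<in> BR \<and> path_edges E p ob \<subseteq> E - Ein \<and>
      (\<forall>s\<in>\<Union>R. path_edges E s ob = path_edges E s p \<union> path_edges E p ob)" if ob: "ob \<in> Obs" for ob
  proof (cases "ob \<in> BR")
    case True
    have "path_edges E ob ob = {}" unfolding path_edges_l using tp_refl[OF tree] ob obsV by auto
    then show ?thesis using True by (intro exI[of _ ob]) auto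
  next
    case False
    have oS: "ob \<notin> S" using False ob UR unfolding S_def by auto
    have oV: "ob \<in> V" "os \<in> V" using ob osO obsV by auto
    define q where "q = tree_path E os ob"
    have Q: "is_path E q" "hd q = os" "last q = ob" "q \<noteq> []" using tpp[OF oV(2,1)] unfolding q_def by auto
    have "\<exists>x\<in>set q. x \<in> S" using Q osBR unfolding S_def by (metis UnI2 list.set_sel(1))
    then obtain a bb where abb: "q = a @ bb" "bb \<noteq> []" "hd bb \<in> S" "\<forall>x\<in>set (tl bb). x \<notin> S"
      using split_last_in[OF Q(4)] by blast
    have wbb: "walk E bb" using walk_suffix[of E a bb] Q(1) abb by (simp add: is_path_iff)
    have dbb: "distinct bb" using Q(1) abb by (simp add: is_path_iff)
    have lbb: "last bb = ob" using Q(3) abb by simp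
    obtain h t where bbht: "bb = h # t" using abb(2) by (cases bb) auto
    have "t \<noteq> []" using bbht lbb oS abb(3) by auto
    then obtain w rest where t: "t = w # rest" by (cases t) auto
    have hw: "{h, w} \<in> E" using wbb bbht t by simp
    have wS: "w \<notin> S" using abb(4) bbht t by simp
    have hS: "h \<in> S" using abb(3) bbht by simp
    have hBR: "h \<in> BR"
    proof (rule ccontr)
      assume "h \<notin> BR"
      then obtain r where r: "r \<in> R" "h \<in> r" using hS unfolding S_def by blast
      show False
      proof (cases "w \<in> Obs")
        case True
        then have "w \<in> obs_boundary E Obs r" using r hw unfolding obs_boundary_def by (auto simp: insert_commute)
        then have "w \<in> BR" using r unfolding BR_def boundary_set_def by blast
        then show False using wS unfolding S_def by blast
      next
        case False
        then have "w \<in> r" using class_adj[OF tree _ r(2) hw] Rcl r(1) by blast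
        then show False using wS r(1) unfolding S_def by blast
      qed
    qed
    have hV: "h \<in> V" using hBR BRO obsV by auto
    have tpbb: "tree_path E h ob = bb"
      using tp_unique[OF tree hV oV(1)] wbb dbb lbb bbht by (simp add: is_path_iff)
    have out: "path_edges E h ob \<subseteq> E - Ein"
    proof
      fix e assume e: "e \<in> path_edges E h ob"
      then have eb: "e \<in> edges_l bb" unfolding path_edges_l tpbb .
      then have "e \<in> E" using edges_l_walk[OF wbb] by blast
      moreover obtain z where "z \<in> set t" "z \<in> e" using edges_l_tl eb bbht by metis
      then have "\<not> e \<subseteq> S" using abb(4) bbht by auto
      ultimately show "e \<in> E - Ein" unfolding Ein_def by blast
    qed
    have split: "path_edges E s ob = path_edges E s h \<union> path_edges E h ob" if s: "s \<in> \<Union>R" for s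
    proof -
      have sV: "s \<in> V" using s UR by auto
      define p where "p = tree_path E s h"
      have P: "is_path E p" "hd p = s" "last p = h" "p \<noteq> []" using tpp[OF sV hV] unfolding p_def by auto
      have pS: "set p \<subseteq> S" using conn[OF s hBR] unfolding p_def .
      have lh: "last p = hd bb" using P bbht by simp
      have J: "hd (p @ tl bb) = hd p \<and> last (p @ tl bb) = last bb \<and> set (p @ tl bb) \<subseteq> set p \<union> set bb
          \<and> edges_l (p @ tl bb) = edges_l p \<union> edges_l bb"
        using join_props[OF P(4) abb(2) lh] .
      have wk: "walk E (p @ tl bb)" using walk_join[OF P(4) abb(2) lh] P(1) wbb by (simp add: is_path_iff)
      have "distinct (p @ tl bb)" using P(1) dbb pS abb(4) by (auto simp: is_path_iff distinct_tl)
      then have "is_path E (p @ tl bb)" using wk by (simp add: is_path_iff)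
      then have "tree_path E s ob = p @ tl bb" using tp_unique[OF tree sV oV(1)] J P lbb by simp
      then show ?thesis unfolding path_edges_l using J tpbb unfolding p_def by simp
    qed
    show ?thesis using hBR out split by blast
  qed
  have "\<forall>ob\<in>Obs. \<exists>p. p \<in> BR \<and> path_edges E p ob \<subseteq> E - Ein \<and>
      (\<forall>s\<in>\<Union>R. path_edges E s ob = path_edges E s p \<union> path_edges E p ob)" using ex by blast
  then obtain pf where pf: "\<forall>ob\<in>Obs. pf ob \<in> BR \<and> path_edges E (pf ob) ob \<subseteq> E - Ein \<and>
      (\<forall>s\<in>\<Union>R. path_edges E s ob = path_edges E s (pf ob) \<union> path_edges E (pf ob) ob)"
    by (rule bchoice[elim_format]) blast
  show ?thesis
    apply (rule exI[of _ pf])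
    using pf edges_in unfolding BR_def S_def Ein_def by blast
qed

end



lemma comp_meas:
  assumes "e \<in> I" and "\<And>e. sets (\<mu> e) = sets borel"
  shows "(\<lambda>\<omega>. \<omega> e :: real) \<in> borel_measurable (PiM I \<mu>)"
proof -
  have 1: "(\<lambda>\<omega>. \<omega> e) \<in> measurable (PiM I \<mu>) (\<mu> e)" by (rule measurable_component_singleton) fact
  have eq: "measurable (PiM I \<mu>) (\<mu> e) = measurable (PiM I \<mu>) borel"
    by (rule measurable_cong_sets) (rule refl, rule assms(2))
  show ?thesis using 1 unfolding eq .
qed

lemma sum_meas:
  assumes "F \<subseteq> I" and "\<And>e. sets (\<mu> e) = sets borel"
  shows "(\<lambda>\<omega>. \<Sum>e\<in>F. \<omega> e :: real) \<in> borel_measurable (PiM I \<mu>)"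
proof (rule borel_measurable_sum)
  fix e assume "e \<in> F"
  then have "e \<in> I" using assms(1) by blast
  then show "(\<lambda>\<omega>. \<omega> e) \<in> borel_measurable (PiM I \<mu>)" by (rule comp_meas) (rule assms(2))
qed

lemma K_props:
  fixes \<mu> :: "'e \<Rightarrow> real measure" and pe :: "'v \<Rightarrow> 'v \<Rightarrow> 'e set"
  assumes mu: "\<And>e. prob_space (\<mu> e)" "\<And>e. sets (\<mu> e) = sets borel"
    and pf: "\<And>ob. ob \<in> Obs \<Longrightarrow> pf ob \<in> BR \<and> pe (pf ob) ob \<subseteq> Eout"
  defines "K \<equiv> \<lambda>v. distr (PiM Eout \<mu>) (PiM Obs (\<lambda>_. borel))
              (\<lambda>y. \<lambda>ob\<in>Obs. v (pf ob) + (\<Sum>e\<in>pe (pf ob) ob. y e))"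
  shows "K \<in> PiM BR (\<lambda>_. borel) \<rightarrow>\<^sub>M subprob_algebra (PiM Obs (\<lambda>_. borel))"
    and "\<And>v. prob_space (K v)"
    and "\<And>v. (\<lambda>y. \<lambda>ob\<in>Obs. v (pf ob) + (\<Sum>e\<in>pe (pf ob) ob. y e)) \<in> PiM Eout \<mu> \<rightarrow>\<^sub>M PiM Obs (\<lambda>_. borel)"
proof -
  interpret Pout: prob_space "PiM Eout \<mu>" by (rule prob_space_PiM) (rule mu)
  have G: "(\<lambda>(v, y). \<lambda>ob\<in>Obs. v (pf ob) + (\<Sum>e\<in>pe (pf ob) ob. y e :: real))
      \<in> PiM BR (\<lambda>_. borel) \<Otimes>\<^sub>M PiM Eout \<mu> \<rightarrow>\<^sub>M PiM Obs (\<lambda>_. borel)"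
    unfolding case_prod_beta
  proof (rule measurable_restrict)
    fix ob assume ob: "ob \<in> Obs"
    have "(\<lambda>v. v (pf ob) :: real) \<in> borel_measurable (PiM BR (\<lambda>_. borel))"
      using pf[OF ob] by (intro measurable_component_singleton) auto
    then have 1: "(\<lambda>x. fst x (pf ob) :: real) \<in> borel_measurable (PiM BR (\<lambda>_. borel) \<Otimes>\<^sub>M PiM Eout \<mu>)"
      by (rule measurable_compose[OF measurable_fst])
    have "(\<lambda>y. \<Sum>e\<in>pe (pf ob) ob. y e :: real) \<in> borel_measurable (PiM Eout \<mu>)"
      using pf[OF ob] mu(2) by (intro sum_meas) auto
    then have 2: "(\<lambda>x. \<Sum>e\<in>pe (pf ob) ob. snd x e :: real) \<in> borel_measurable (PiM BR (\<lambda>_. borel) \<Otimes>\<^sub>M PiM Eout \<mu>)"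
      by (rule measurable_compose[OF measurable_snd])
    show "(\<lambda>x. fst x (pf ob) + (\<Sum>e\<in>pe (pf ob) ob. snd x e)) \<in> borel_measurable (PiM BR (\<lambda>_. borel) \<Otimes>\<^sub>M PiM Eout \<mu>)"
      using 1 2 by (rule borel_measurable_add)
  qed
  have "(\<lambda>x. distr ((\<lambda>_. PiM Eout \<mu>) x) (PiM Obs (\<lambda>_. borel))
          ((\<lambda>v y. \<lambda>ob\<in>Obs. v (pf ob) + (\<Sum>e\<in>pe (pf ob) ob. y e)) x))
      \<in> PiM BR (\<lambda>_. borel) \<rightarrow>\<^sub>M subprob_algebra (PiM Obs (\<lambda>_. borel))"
  proof (rule measurable_distr2)
    show "case_prod (\<lambda>v y. \<lambda>ob\<in>Obs. v (pf ob) + (\<Sum>e\<in>pe (pf ob) ob. y e)) \<in> PiM BR (\<lambda>_. borel) \<Otimes>\<^sub>M PiM Eout \<mu> \<rightarrow>\<^sub>M PiM Obs (\<lambda>_. borel)"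
      using G by simp
    show "(\<lambda>_. PiM Eout \<mu>) \<in> PiM BR (\<lambda>_. borel) \<rightarrow>\<^sub>M subprob_algebra (PiM Eout \<mu>)"
      by (rule measurable_const) (auto simp: space_subprob_algebra Pout.subprob_space_axioms)
  qed
  then show "K \<in> PiM BR (\<lambda>_. borel) \<rightarrow>\<^sub>M subprob_algebra (PiM Obs (\<lambda>_. borel))"
    unfolding K_def by simp
  show Gv: "(\<lambda>y. \<lambda>ob\<in>Obs. v (pf ob) + (\<Sum>e\<in>pe (pf ob) ob. y e)) \<in> PiM Eout \<mu> \<rightarrow>\<^sub>M PiM Obs (\<lambda>_. borel)" for v
  proof (rule measurable_restrict)
    fix ob assume ob: "ob \<in> Obs"
    have "(\<lambda>y. \<Sum>e\<in>pe (pf ob) ob. y e :: real) \<in> borel_measurable (PiM Eout \<mu>)"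
      using pf[OF ob] mu(2) by (intro sum_meas) auto
    then show "(\<lambda>y. v (pf ob) + (\<Sum>e\<in>pe (pf ob) ob. y e)) \<in> borel_measurable (PiM Eout \<mu>)"
      by simp
  qed
  show "prob_space (K v)" for v
    unfolding K_def by (rule Pout.prob_space_distr[OF Gv])
qed




lemma measure_main:
  fixes \<mu> :: "'e \<Rightarrow> real measure" and pe :: "'v \<Rightarrow> 'v \<Rightarrow> 'e set"
  assumes fin: "finite Ein" "finite Eout" and disj: "Ein \<inter> Eout = {}"
    and mu: "\<And>e. prob_space (\<mu> e)" "\<And>e. sets (\<mu> e) = sets borel"
    and BRO: "BR \<subseteq> Obs"
    and pf: "\<And>ob. ob \<in> Obs \<Longrightarrow> pf ob \<in> BR \<and> pe (pf ob) ob \<subseteq> Eout"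
    and sin: "\<And>b. b \<in> BR \<Longrightarrow> pe s b \<subseteq> Ein"
    and split: "\<And>ob. ob \<in> Obs \<Longrightarrow> pe s ob = pe s (pf ob) \<union> pe (pf ob) ob"
    and A: "A \<in> sets (PiM BR (\<lambda>_. borel))" and B: "B \<in> sets (PiM Obs (\<lambda>_. borel))"
  defines "K \<equiv> \<lambda>v. distr (PiM Eout \<mu>) (PiM Obs (\<lambda>_. borel))
              (\<lambda>y. \<lambda>ob\<in>Obs. v (pf ob) + (\<Sum>e\<in>pe (pf ob) ob. y e))"
    and "Y \<equiv> \<lambda>\<omega>. \<lambda>ob\<in>Obs. \<Sum>e\<in>pe s ob. \<omega> e"
  shows "emeasure (PiM (Ein \<union> Eout) \<mu>)
          {\<omega>\<in>space (PiM (Ein \<union> Eout) \<mu>). restrict (Y \<omega>) BR \<in> A \<and> Y \<omega> \<in> B}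
        = (\<integral>\<^sup>+ x. indicator A x * emeasure (K x) B
             \<partial>(distr (PiM (Ein \<union> Eout) \<mu>) (PiM BR (\<lambda>_. borel)) (\<lambda>\<omega>. restrict (Y \<omega>) BR)))"
proof -
  let ?P = "PiM (Ein \<union> Eout) \<mu>" and ?Pin = "PiM Ein \<mu>" and ?Pout = "PiM Eout \<mu>"
  let ?N = "PiM Obs (\<lambda>_. borel :: real measure)" and ?NB = "PiM BR (\<lambda>_. borel :: real measure)"
  define X where "X = (\<lambda>\<omega>. restrict (Y \<omega>) BR)"
  define X' where "X' = (\<lambda>x. \<lambda>b\<in>BR. \<Sum>e\<in>pe s b. x e :: real)"
  define G where "G = (\<lambda>v y. \<lambda>ob\<in>Obs. v (pf ob) + (\<Sum>e\<in>pe (pf ob) ob. y e :: real))"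
  define h where "h = (\<lambda>v. indicator A v * emeasure (K v) B)"
  interpret PS: product_sigma_finite \<mu>
    by (rule product_sigma_finite.intro) (rule prob_space_imp_sigma_finite[OF mu(1)])
  interpret Pout: prob_space ?Pout by (rule prob_space_PiM) (rule mu)
  have Kp: "K \<in> ?NB \<rightarrow>\<^sub>M subprob_algebra ?N" "\<And>v. G v \<in> ?Pout \<rightarrow>\<^sub>M ?N"
    using K_props[of \<mu> Obs pf BR pe Eout, OF mu pf] unfolding K_def G_def by auto
  have KG: "K v = distr ?Pout ?N (G v)" for v unfolding K_def G_def ..
  have peE: "pe s ob \<subseteq> Ein \<union> Eout" if "ob \<in> Obs" for ob
    using split[OF that] sin pf[OF that] by blast
  have mY: "Y \<in> ?P \<rightarrow>\<^sub>M ?N"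
    unfolding Y_def
  proof (rule measurable_restrict)
    fix ob assume "ob \<in> Obs"
    then show "(\<lambda>\<omega>. \<Sum>e\<in>pe s ob. \<omega> e) \<in> borel_measurable ?P"
      using peE by (intro sum_meas mu(2)) blast
  qed
  have mX: "X \<in> ?P \<rightarrow>\<^sub>M ?NB"
    unfolding X_def
  proof (rule measurable_restrict)
    fix b assume "b \<in> BR"
    then have "b \<in> Obs" using BRO by blast
    then have "(\<lambda>\<omega>. Y \<omega> b) = (\<lambda>\<omega>. \<Sum>e\<in>pe s b. \<omega> e)" unfolding Y_def by simp
    moreover have "(\<lambda>\<omega>. \<Sum>e\<in>pe s b. \<omega> e) \<in> borel_measurable ?P"
      using peE \<open>b \<in> Obs\<close> by (intro sum_meas mu(2)) blast
    ultimately show "(\<lambda>\<omega>. Y \<omega> b) \<in> borel_measurable ?P" by simp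
  qed
  have mh: "h \<in> borel_measurable ?NB"
    unfolding h_def
  proof (rule borel_measurable_times_ennreal)
    show "indicator A \<in> borel_measurable ?NB" using A by (rule borel_measurable_indicator)
    show "(\<lambda>v. emeasure (K v) B) \<in> borel_measurable ?NB"
      using measurable_compose[OF Kp(1) measurable_emeasure_subprob_algebra[OF B]] by simp
  qed
  have finsum: "finite (pe s ob)" "finite (pe (pf ob) ob)" if "ob \<in> Obs" for ob
    using peE[OF that] pf[OF that] fin finite_subset by (auto intro: finite_subset)
  have key: "Y (merge Ein Eout (x, y)) = G (X' x) y" for x y
  proof
    fix ob
    show "Y (merge Ein Eout (x, y)) ob = G (X' x) y ob"
    proof (cases "ob \<in> Obs")
      case True
      have d: "pe s (pf ob) \<inter> pe (pf ob) ob = {}" using sin pf[OF True] disj by blast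
      have f: "finite (pe s (pf ob))" "finite (pe (pf ob) ob)"
        using sin pf[OF True] fin by (auto intro: finite_subset)
      have "Y (merge Ein Eout (x, y)) ob = (\<Sum>e\<in>pe s (pf ob). merge Ein Eout (x, y) e) + (\<Sum>e\<in>pe (pf ob) ob. merge Ein Eout (x, y) e)"
        unfolding Y_def using True split[OF True] sum.union_disjoint[OF f d] by simp
      also have "(\<Sum>e\<in>pe s (pf ob). merge Ein Eout (x, y) e) = (\<Sum>e\<in>pe s (pf ob). x e)"
        using sin[of "pf ob"] pf[OF True] disj by (intro sum.cong) (auto simp: subset_iff)
      also have "(\<Sum>e\<in>pe (pf ob) ob. merge Ein Eout (x, y) e) = (\<Sum>e\<in>pe (pf ob) ob. y e)"
        using pf[OF True] disj by (intro sum.cong) auto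
      finally show ?thesis unfolding G_def X'_def using True pf[OF True] by simp
    next
      case False
      then show ?thesis unfolding Y_def G_def by simp
    qed
  qed
  have keyX: "X (merge Ein Eout (x, y)) = X' x" for x y
  proof
    fix b
    show "X (merge Ein Eout (x, y)) b = X' x b"
    proof (cases "b \<in> BR")
      case True
      then have "b \<in> Obs" using BRO by blast
      have "X (merge Ein Eout (x, y)) b = (\<Sum>e\<in>pe s b. merge Ein Eout (x, y) e)"
        unfolding X_def Y_def using True \<open>b \<in> Obs\<close> by simp
      also have "\<dots> = (\<Sum>e\<in>pe s b. x e)" using sin[OF True] disj by (intro sum.cong) auto
      finally show ?thesis unfolding X'_def using True by simp
    next
      case False then show ?thesis unfolding X_def X'_def by simp
    qed
  qed
  have merge_sp: "merge Ein Eout (x, y) \<in> space ?P" if "x \<in> space ?Pin" "y \<in> space ?Pout" for x y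
    using measurable_space[OF measurable_merge, of "(x, y)" Ein \<mu> Eout] that by (simp add: space_pair_measure)
  define Set where "Set = {\<omega>\<in>space ?P. X \<omega> \<in> A \<and> Y \<omega> \<in> B}"
  have SetM: "Set \<in> sets ?P"
  proof -
    have "Set = (X -` A \<inter> space ?P) \<inter> (Y -` B \<inter> space ?P)" unfolding Set_def by blast
    then show ?thesis using measurable_sets[OF mX A] measurable_sets[OF mY B] by auto
  qed
  have inner: "(\<integral>\<^sup>+ y. indicator Set (merge Ein Eout (x, y)) \<partial>?Pout) = h (X' x)" if x: "x \<in> space ?Pin" for x
  proof -
    have "(\<integral>\<^sup>+ y. indicator Set (merge Ein Eout (x, y)) \<partial>?Pout)
        = (\<integral>\<^sup>+ y. indicator A (X' x) * indicator B (G (X' x) y) \<partial>?Pout)"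
    proof (rule nn_integral_cong)
      fix y assume "y \<in> space ?Pout"
      then have "merge Ein Eout (x, y) \<in> space ?P" using merge_sp x by blast
      then show "indicator Set (merge Ein Eout (x, y)) = (indicator A (X' x) * indicator B (G (X' x) y) :: ennreal)"
        unfolding Set_def using key keyX by (simp add: indicator_def)
    qed
    also have "\<dots> = indicator A (X' x) * (\<integral>\<^sup>+ y. indicator B (G (X' x) y) \<partial>?Pout)"
    proof (rule nn_integral_cmult)
      show "(\<lambda>y. indicator B (G (X' x) y)) \<in> borel_measurable ?Pout"
        by (rule measurable_compose[OF Kp(2)[of "X' x"] borel_measurable_indicator[OF B]])
    qed
    also have "(\<integral>\<^sup>+ y. indicator B (G (X' x) y) \<partial>?Pout) = (\<integral>\<^sup>+ z. indicator B z \<partial>K (X' x))"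
      unfolding KG by (rule nn_integral_distr[symmetric]) (use Kp(2) B in auto)
    also have "\<dots> = emeasure (K (X' x)) B"
      by (rule nn_integral_indicator) (simp add: KG B)
    finally show ?thesis unfolding h_def .
  qed
  have "emeasure ?P Set = (\<integral>\<^sup>+ \<omega>. indicator Set \<omega> \<partial>?P)"
    using SetM by simp
  also have "\<dots> = (\<integral>\<^sup>+ x. (\<integral>\<^sup>+ y. indicator Set (merge Ein Eout (x, y)) \<partial>?Pout) \<partial>?Pin)"
    by (rule PS.product_nn_integral_fold[OF disj fin]) (use SetM in simp)
  also have "\<dots> = (\<integral>\<^sup>+ x. h (X' x) \<partial>?Pin)"
    by (rule nn_integral_cong) (rule inner)
  finally have L: "emeasure ?P Set = (\<integral>\<^sup>+ x. h (X' x) \<partial>?Pin)" .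
  have mhX: "(\<lambda>\<omega>. h (X \<omega>)) \<in> borel_measurable ?P" using measurable_compose[OF mX mh] .
  have "(\<integral>\<^sup>+ v. h v \<partial>distr ?P ?NB X) = (\<integral>\<^sup>+ \<omega>. h (X \<omega>) \<partial>?P)"
    by (rule nn_integral_distr) (use mX mh in auto)
  also have "\<dots> = (\<integral>\<^sup>+ x. (\<integral>\<^sup>+ y. h (X (merge Ein Eout (x, y))) \<partial>?Pout) \<partial>?Pin)"
    by (rule PS.product_nn_integral_fold[OF disj fin mhX])
  also have "\<dots> = (\<integral>\<^sup>+ x. h (X' x) \<partial>?Pin)"
  proof (rule nn_integral_cong)
    fix x
    have "(\<integral>\<^sup>+ y. h (X (merge Ein Eout (x, y))) \<partial>?Pout) = (\<integral>\<^sup>+ y. h (X' x) \<partial>?Pout)"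
      unfolding keyX ..
    also have "\<dots> = h (X' x)" using Pout.emeasure_space_1 by simp
    finally show "(\<integral>\<^sup>+ y. h (X (merge Ein Eout (x, y))) \<partial>?Pout) = h (X' x)" .
  qed
  finally have R: "(\<integral>\<^sup>+ v. h v \<partial>distr ?P ?NB X) = (\<integral>\<^sup>+ x. h (X' x) \<partial>?Pin)" .
  show ?thesis using L R unfolding Set_def X_def h_def by simp
qed



theorem theorem2:
  fixes V :: "'a set" and E :: "'a set set" and Obs :: "'a set"
    and \<mu> :: "'a set \<Rightarrow> real measure" and R :: "'a set set"
  assumes tree: "is_tree V E"
    and obs: "Obs \<noteq> {}" "Obs \<subset> V"
    and laws: "\<forall>e\<in>E. prob_space (\<mu> e) \<and> sets (\<mu> e) = sets borel \<and>
                 emeasure (\<mu> e) {..<0} = 0 \<and> (\<forall>x. emeasure (\<mu> e) {x} = 0)"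
    and star: "star_arrangement V E Obs R"
  shows "\<exists>K. K \<in> PiM (boundary_set E Obs R) (\<lambda>_. borel) \<rightarrow>\<^sub>M subprob_algebra (PiM Obs (\<lambda>_. borel)) \<and>
     (\<forall>x\<in>space (PiM (boundary_set E Obs R) (\<lambda>_. borel)). prob_space (K x)) \<and>
     (\<forall>s\<in>\<Union>R. \<forall>A\<in>sets (PiM (boundary_set E Obs R) (\<lambda>_. borel)). \<forall>B\<in>sets (PiM Obs (\<lambda>_. borel)).
        emeasure (PiM E \<mu>)
          {\<omega>\<in>space (PiM E \<mu>). restrict (obs_vector E Obs s \<omega>) (boundary_set E Obs R) \<in> A \<and>
                             obs_vector E Obs s \<omega> \<in> B}
        = (\<integral>\<^sup>+ x. indicator A x * emeasure (K x) B
             \<partial>(distr (PiM E \<mu>) (PiM (boundary_set E Obs R) (\<lambda>_. borel))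
                  (\<lambda>\<omega>. restrict (obs_vector E Obs s \<omega>) (boundary_set E Obs R)))))"
  proof -
  let ?N = "PiM Obs (\<lambda>_. borel :: real measure)"
  let ?BR = "boundary_set E Obs R"
  let ?NB = "PiM ?BR (\<lambda>_. borel :: real measure)"
  have obsV: "Obs \<subseteq> V" using obs by blast
  show ?thesis
  proof (cases "R = {}")
    case True
    define c where "c = (\<lambda>ob\<in>Obs. 0 :: real)"
    have cN: "c \<in> space ?N" unfolding c_def by (simp add: space_PiM)
    have "return ?N c \<in> space (subprob_algebra ?N)"
      using cN by (simp add: space_subprob_algebra subprob_space_return)
    then have "(\<lambda>_. return ?N c) \<in> ?NB \<rightarrow>\<^sub>M subprob_algebra ?N" by (rule measurable_const)
    moreover have "\<forall>x\<in>space ?NB. prob_space (return ?N c)" using cN by (simp add: prob_space_return)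
    ultimately show ?thesis using True by (intro exI[of _ "\<lambda>_. return ?N c"]) simp
  next
    case False
    obtain pf where pf: "\<forall>ob\<in>Obs. pf ob \<in> ?BR \<and>
              path_edges E (pf ob) ob \<subseteq> E - {e\<in>E. e \<subseteq> \<Union>R \<union> ?BR}"
      "\<forall>s\<in>\<Union>R. \<forall>b\<in>?BR. path_edges E s b \<subseteq> {e\<in>E. e \<subseteq> \<Union>R \<union> ?BR}"
      "\<forall>s\<in>\<Union>R. \<forall>ob\<in>Obs. path_edges E s ob = path_edges E s (pf ob) \<union> path_edges E (pf ob) ob"
      using tree_structure[OF tree obsV star False] by blast
    define Ein where "Ein = {e\<in>E. e \<subseteq> \<Union>R \<union> ?BR}"
    define Eout where "Eout = E - Ein"
    define \<mu>' where "\<mu>' = (\<lambda>e. if e \<in> E then \<mu> e else return borel (0::real))"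
    have mu': "\<And>e. prob_space (\<mu>' e)" "\<And>e. sets (\<mu>' e) = sets borel"
      unfolding \<mu>'_def using laws by (auto simp: prob_space_return)
    have finE: "finite E"
    proof -
      have "E \<subseteq> Pow V" using tree unfolding is_tree_def by blast
      moreover have "finite V" using tree unfolding is_tree_def by blast
      ultimately show ?thesis by (meson finite_Pow_iff finite_subset)
    qed
    have fin: "finite Ein" "finite Eout" unfolding Ein_def Eout_def using finE by auto
    have disj: "Ein \<inter> Eout = {}" and EE: "E = Ein \<union> Eout" unfolding Eout_def Ein_def by auto
    have BRO: "?BR \<subseteq> Obs" unfolding boundary_set_def obs_boundary_def by blast
    have pf1: "\<And>ob. ob \<in> Obs \<Longrightarrow> pf ob \<in> ?BR \<and> path_edges E (pf ob) ob \<subseteq> Eout"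
      using pf(1) unfolding Eout_def Ein_def by blast
    define K where "K = (\<lambda>v. distr (PiM Eout \<mu>') (PiM Obs (\<lambda>_. borel))
              (\<lambda>y. \<lambda>ob\<in>Obs. v (pf ob) + (\<Sum>e\<in>path_edges E (pf ob) ob. y e)))"
    note KP = K_props[of \<mu>' Obs pf ?BR "path_edges E" Eout, OF mu' pf1]
    have PE: "PiM E \<mu> = PiM (Ein \<union> Eout) \<mu>'"
      by (rule PiM_cong) (auto simp: EE[symmetric] \<mu>'_def)
    have OV: "obs_vector E Obs s = (\<lambda>\<omega>. \<lambda>ob\<in>Obs. \<Sum>e\<in>path_edges E s ob. \<omega> e)" for s
      unfolding obs_vector_def infection_time_def ..
    show ?thesis
    proof (intro exI[of _ K] conjI ballI)
      show "K \<in> ?NB \<rightarrow>\<^sub>M subprob_algebra ?N" using KP(1) unfolding K_def .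
      show "prob_space (K x)" for x using KP(2) unfolding K_def .
      fix s A B assume s: "s \<in> \<Union>R" and A: "A \<in> sets ?NB" and B: "B \<in> sets ?N"
      have sin: "\<And>b. b \<in> ?BR \<Longrightarrow> path_edges E s b \<subseteq> Ein" using pf(2) s unfolding Ein_def by blast
      have split: "\<And>ob. ob \<in> Obs \<Longrightarrow> path_edges E s ob = path_edges E s (pf ob) \<union> path_edges E (pf ob) ob"
        using pf(3) s by blast
      show "emeasure (PiM E \<mu>)
          {\<omega>\<in>space (PiM E \<mu>). restrict (obs_vector E Obs s \<omega>) ?BR \<in> A \<and> obs_vector E Obs s \<omega> \<in> B}
        = (\<integral>\<^sup>+ x. indicator A x * emeasure (K x) B
             \<partial>(distr (PiM E \<mu>) ?NB (\<lambda>\<omega>. restrict (obs_vector E Obs s \<omega>) ?BR)))"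
        unfolding PE OV K_def
        by (rule measure_main[OF fin disj mu' BRO pf1 sin split A B])
    qed
  qed
qed

end
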